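(* Let $\mathfrak v_8$ be a $C(8)$-module and $\mathfrak v_r$ a $C(r)$-module, and let $\mathfrak v_8\otimes\mathfrak v_r$ carry the $C(8+r)$-module structure $J_{(z,w)}=J_z\otimes\mathrm{Id}+K_8\otimes J_w$. If $\mathcal L_r\in{\rm Lag}(\mathfrak v_r)$ and $\mathcal L_8\in{\rm Lag}(\mathfrak v_8)$, then $$\mathcal L_8\otimes\mathcal L_r+\mathcal L_8^\perp\otimes\mathcal L_r^\perp\ \in\ {\rm Lag}(\mathfrak v_8\otimes\mathfrak v_r).$$
   Context: $C(k)$ is the real Clifford algebra of $\mathbb R^k$ with relations $z^2=-\langle z,z\rangle 1$; a $C(k)$-module $\mathfrak w$ has an inner product making each $J_z$ skew-symmetric, and defines the Lie algebra of Heisenberg type $\mathfrak w\oplus\mathbb R^k$ with $\mathbb R^k$ central and $\langle z,[u,v]\rangle=\langle J_zu,v\rangle$. $K_8=J_{z_1}\cdots J_{z_8}$ for an orthonormal basis of $\mathbb R^8$. ${\rm Lag}(\mathfrak w)$ is the set of subspaces $\mathcal L\subset\mathfrak w$ with $[\mathcal L,\mathcal L]=0$ and $\dim\mathcal L=\frac12\dim\mathfrak w$; $\perp$ denotes orthogonal complement; $\mathfrak v_8\otimes\mathfrak v_r$ has the tensor product inner product. *)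

theory Defs
  imports "HOL-Analysis.Analysis"
begin

text \<open>A C(k)-module structure on the Euclidean space real^'n (standard inner product)
  is given by the images Js = [J_{e_1},...,J_{e_k}] of an orthonormal basis of R^k:
  each J_i is skew-symmetric and J_i J_j + J_j J_i = -2 delta_ij Id.
  Then J_z = sum z_i J_i satisfies J_z^2 = -|z|^2 Id and is skew-symmetric.\<close>

definition clifford_module :: "(real^'n^'n) list \<Rightarrow> bool" where
  "clifford_module Js \<longleftrightarrow>
     (\<forall>i<length Js. transpose (Js!i) = - (Js!i)) \<and>
     (\<forall>i<length Js. \<forall>j<length Js.
        Js!i ** Js!j + Js!j ** Js!i = mat (if i = j then -2 else 0))"

text \<open>Coordinates of the Heisenberg-type bracket [u,v] in R^k w.r.t. the orthonormal
  basis e_1..e_k: <e_i,[u,v]> = <J_{e_i} u, v>.\<close>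

definition heis_bracket :: "(real^'n^'n) list \<Rightarrow> real^'n \<Rightarrow> real^'n \<Rightarrow> real list" where
  "heis_bracket Js u v = map (\<lambda>J. (J *v u) \<bullet> v) Js"

definition Lag :: "(real^'n^'n) list \<Rightarrow> (real^'n) set set" where
  "Lag Js = {L. subspace L \<and>
      (\<forall>u\<in>L. \<forall>v\<in>L. heis_bracket Js u v = replicate (length Js) 0) \<and>
      2 * dim L = CARD('n)}"

text \<open>Tensor products, realised in coordinates: real^'a \<otimes> real^'b = real^('a \<times> 'b)
  with the standard (= tensor product) inner product.\<close>

definition tensor_vec :: "real^'a \<Rightarrow> real^'b \<Rightarrow> real^('a \<times> 'b)" where
  "tensor_vec x y = (\<chi> p. x $ fst p * y $ snd p)"

definition tensor_mat :: "real^'a^'a \<Rightarrow> real^'b^'b \<Rightarrow> real^('a \<times> 'b)^('a \<times> 'b)" where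
  "tensor_mat A B = (\<chi> p q. A $ fst p $ fst q * B $ snd p $ snd q)"

definition tensor_space :: "(real^'a) set \<Rightarrow> (real^'b) set \<Rightarrow> (real^('a \<times> 'b)) set" where
  "tensor_space L M = span {tensor_vec x y | x y. x \<in> L \<and> y \<in> M}"

definition subspace_sum :: "('v::real_vector) set \<Rightarrow> 'v set \<Rightarrow> 'v set" where
  "subspace_sum A B = {a + b | a b. a \<in> A \<and> b \<in> B}"

text \<open>K_8 = J_{z_1} ... J_{z_8} (product of the generators, in order).\<close>

definition Kprod :: "(real^'n^'n) list \<Rightarrow> real^'n^'n" where
  "Kprod Js = foldr (**) Js (mat 1)"

text \<open>Generators of the C(8+r)-module structure J_{(z,w)} = J_z \<otimes> Id + K_8 \<otimes> J_w,
  evaluated on the orthonormal basis (e_1,0),...,(e_8,0),(0,f_1),...,(0,f_r).\<close>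

definition tensor_gens :: "(real^'a^'a) list \<Rightarrow> (real^'b^'b) list
     \<Rightarrow> (real^('a \<times> 'b)^('a \<times> 'b)) list" where
  "tensor_gens Js8 Jsr =
     map (\<lambda>A. tensor_mat A (mat 1)) Js8 @ map (\<lambda>B. tensor_mat (Kprod Js8) B) Jsr"

end

theory Submission
  imports Defs
begin

lemma sum_UNIV_prod: "(\<Sum>p\<in>(UNIV::('a::finite\<times>'b::finite) set). f p) = (\<Sum>i\<in>UNIV. \<Sum>j\<in>UNIV. f (i,j))"
  by (simp add: sum.cartesian_product UNIV_Times_UNIV[symmetric] del: UNIV_Times_UNIV)

lemma tv_inner: "tensor_vec a b \<bullet> tensor_vec c d = (a \<bullet> c) * (b \<bullet> d)"
  unfolding tensor_vec_def inner_vec_def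
  by (simp add: sum_UNIV_prod sum_product) (simp add: ac_simps)

lemma tm_mult: "tensor_mat A B *v tensor_vec x y = tensor_vec (A *v x) (B *v y)"
  unfolding tensor_vec_def tensor_mat_def
  by (simp add: vec_eq_iff matrix_vector_mult_def sum_UNIV_prod sum_product) (simp add: ac_simps)

lemma bilinear_tv: "bilinear tensor_vec"
  unfolding bilinear_def
  by (auto intro!: linearI simp: tensor_vec_def vec_eq_iff algebra_simps)

lemma bilinear_br: "bilinear (\<lambda>u v. ((G::real^'n^'n) *v u) \<bullet> v)"
  unfolding bilinear_def
  by (auto intro!: linearI simp: matrix_vector_right_distrib inner_add_left inner_add_right
     matrix_vector_mult_scaleR)

lemma neg_mv: "(- (J::real^'n^'n)) *v v = - (J *v v)"
  by (simp add: vec_eq_iff matrix_vector_mult_def sum_negf)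

lemma skew:
  assumes "transpose J = - J"
  shows "((J::real^'n^'n) *v u) \<bullet> v = - (u \<bullet> (J *v v))"
proof -
  have "(J *v u) \<bullet> v = (v v* J) \<bullet> u" by (metis dot_lmul_matrix inner_commute)
  also have "\<dots> = (v v* transpose (transpose J)) \<bullet> u" by simp
  also have "\<dots> = - (u \<bullet> (J *v v))" unfolding assms vector_transpose_matrix
    by (simp add: inner_commute neg_mv)
  finally show ?thesis .
qed

lemma map_repl: "map f xs = replicate (length xs) 0 \<longleftrightarrow> (\<forall>x\<in>set xs. f x = 0)"
  by (induct xs) auto

lemma cl_skew: assumes "clifford_module Js" "J \<in> set Js" shows "transpose J = - J"
proof -
  obtain i where "i < length Js" "J = Js ! i" using assms(2) by (auto simp: in_set_conv_nth)
  then show ?thesis using assms(1) unfolding clifford_module_def by blast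
qed

lemma cl_sq: assumes "clifford_module Js" "J \<in> set Js" shows "J ** J = mat (-1)"
proof -
  obtain i where i: "i < length Js" "J = Js ! i" using assms(2) by (auto simp: in_set_conv_nth)
  have "J ** J + J ** J = mat (if i = i then -2 else 0)"
    using assms(1) i unfolding clifford_module_def by blast
  then have "J ** J + J ** J = mat (-2)" by simp
  note eq = this
  have "(J**J)$i$j = (if i = j then -1 else 0)" for i j
  proof -
    have "(J**J + J**J)$i$j = mat (-2) $i$j" by (simp only: eq)
    then have "(J**J)$i$j + (J**J)$i$j = (if i = j then -2 else 0)" by (simp add: mat_def)
    then show ?thesis by (cases "i = j") simp_all
  qed
  then show ?thesis by (simp add: vec_eq_iff mat_def)
qed

lemma mat_m1: "mat (-1) *v (x::real^'n) = - x"
  proof -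
  have "mat (-1) = - (mat 1 :: real^'n^'n)" by (simp add: vec_eq_iff mat_def)
  then show ?thesis by (simp add: neg_mv)
qed

lemma cl_JJ: "clifford_module Js \<Longrightarrow> J \<in> set Js \<Longrightarrow> J *v (J *v x) = - x"
  by (simp add: matrix_vector_mul_assoc cl_sq mat_m1)

lemma Lag_sub: "L \<in> Lag Js \<Longrightarrow> subspace L" unfolding Lag_def by auto
lemma Lag_dim: "L \<in> Lag (Js::(real^'n^'n) list) \<Longrightarrow> 2 * dim L = CARD('n)" unfolding Lag_def by auto

lemma Lag_br: "L \<in> Lag Js \<Longrightarrow> J \<in> set Js \<Longrightarrow> u \<in> L \<Longrightarrow> v \<in> L \<Longrightarrow> (J *v u) \<bullet> v = 0"
  unfolding Lag_def heis_bracket_def map_repl by auto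

lemma Lag_JL: assumes "L \<in> Lag Js" "J \<in> set Js" "u \<in> L" shows "J *v u \<in> orthogonal_comp L"
proof -
  have "\<forall>y\<in>L. y \<bullet> (J *v u) = 0" using Lag_br[OF assms] by (simp add: inner_commute)
  then show ?thesis unfolding orthogonal_comp_def orthogonal_def by simp
qed

lemma dim_perp: assumes "subspace (L::(real^'n) set)" shows "dim (orthogonal_comp L) + dim L = CARD('n)"
proof -
  have "dim {y \<in> UNIV. \<forall>x \<in> L. orthogonal x y} + dim L = dim (UNIV::(real^'n) set)"
    by (rule dim_subspace_orthogonal_to_vectors) (use assms in auto)
  moreover have "{y \<in> UNIV. \<forall>x \<in> L. orthogonal x y} = orthogonal_comp L"
    unfolding orthogonal_comp_def by auto
  ultimately show ?thesis by simp
qed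

lemma Lag_img: assumes "clifford_module Js" "L \<in> Lag Js" "J \<in> set Js"
  shows "(\<lambda>x. J *v x) ` L = orthogonal_comp L"
proof (rule subspace_dim_equal)
  show "subspace ((\<lambda>x. J *v x) ` L)"
    by (rule linear_subspace_image) (use Lag_sub[OF assms(2)] in auto)
  show "subspace (orthogonal_comp L)" by (rule subspace_orthogonal_comp)
  show "(\<lambda>x. J *v x) ` L \<subseteq> orthogonal_comp L" using Lag_JL assms by blast
  have "inj (\<lambda>x. J *v x)"
  proof (rule injI)
    fix x y assume "J *v x = J *v y"
    then have "J *v (J *v x) = J *v (J *v y)" by simp
    then show "x = y" using cl_JJ[OF assms(1,3)] by simp
  qed
  then have "dim ((\<lambda>x. J *v x) ` L) = dim L"
    by (intro dim_image_eq) (auto intro: inj_on_subset)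
  then show "dim (orthogonal_comp L) \<le> dim ((\<lambda>x. J *v x) ` L)"
    using dim_perp[OF Lag_sub[OF assms(2)]] Lag_dim[OF assms(2)] by linarith
qed

lemma Lag_Jperp: assumes "clifford_module Js" "L \<in> Lag Js" "J \<in> set Js" "w \<in> orthogonal_comp L"
  shows "J *v w \<in> L"
proof -
  obtain u where "u \<in> L" "w = J *v u" using Lag_img[OF assms(1-3)] assms(4) by blast
  then have "J *v w = - u" using cl_JJ[OF assms(1,3)] by simp
  then show ?thesis using \<open>u \<in> L\<close> Lag_sub[OF assms(2)] by (simp add: subspace_neg)
qed

lemma perp_inner: "x \<in> orthogonal_comp L \<Longrightarrow> y \<in> L \<Longrightarrow> x \<bullet> y = 0 \<and> y \<bullet> x = 0"
  unfolding orthogonal_comp_def orthogonal_def by (auto simp: inner_commute)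

lemma K_pres: assumes "clifford_module Js" "L \<in> Lag Js" "set xs \<subseteq> set Js"
  shows "(\<forall>u\<in>L. foldr (**) xs (mat 1) *v u \<in> (if even (length xs) then L else orthogonal_comp L)) \<and>
         (\<forall>u\<in>orthogonal_comp L. foldr (**) xs (mat 1) *v u \<in> (if even (length xs) then orthogonal_comp L else L))"
  using assms(3)
proof (induct xs)
  case Nil
  then show ?case by simp
next
  case (Cons J xs)
  have J: "J \<in> set Js" using Cons.prems by simp
  have IH: "(\<forall>u\<in>L. foldr (**) xs (mat 1) *v u \<in> (if even (length xs) then L else orthogonal_comp L)) \<and>
         (\<forall>u\<in>orthogonal_comp L. foldr (**) xs (mat 1) *v u \<in> (if even (length xs) then orthogonal_comp L else L))"
    using Cons by simp
  have e: "foldr (**) (J # xs) (mat 1) *v u = J *v (foldr (**) xs (mat 1) *v u)" for u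
    by (simp add: matrix_vector_mul_assoc)
  have A: "\<forall>u\<in>L. J *v u \<in> orthogonal_comp L" using Lag_JL[OF assms(2) J] by blast
  have B: "\<forall>u\<in>orthogonal_comp L. J *v u \<in> L" using Lag_Jperp[OF assms(1,2) J] by blast
  show ?case
  proof (cases "even (length xs)")
    case True
    then have "length (J # xs) \<noteq> 0 \<and> odd (length (J # xs))" by simp
    then show ?thesis unfolding e using IH A B True by (simp only: if_True if_False) blast
  next
    case False
    then have "even (length (J # xs))" by simp
    then show ?thesis unfolding e using IH A B False by (simp only: if_True if_False) blast
  qed
qed


lemma tv_add1: "tensor_vec (x1 + x2) y = tensor_vec x1 y + tensor_vec x2 y"
  by (simp add: tensor_vec_def vec_eq_iff algebra_simps)
lemma tv_add2: "tensor_vec x (y1 + y2) = tensor_vec x y1 + tensor_vec x y2"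
  by (simp add: tensor_vec_def vec_eq_iff algebra_simps)
lemma tv_scale1: "tensor_vec (c *\<^sub>R x) y = c *\<^sub>R tensor_vec x y"
  by (simp add: tensor_vec_def vec_eq_iff algebra_simps)
lemma tv_scale2: "tensor_vec x (c *\<^sub>R y) = c *\<^sub>R tensor_vec x y"
  by (simp add: tensor_vec_def vec_eq_iff algebra_simps)
lemma tv_zero1: "tensor_vec 0 y = 0" by (simp add: tensor_vec_def vec_eq_iff)
lemma tv_zero2: "tensor_vec x 0 = 0" by (simp add: tensor_vec_def vec_eq_iff)

lemma tv_span:
  assumes "x \<in> span B" "y \<in> span C"
  shows "tensor_vec x y \<in> span {tensor_vec a b | a b. a \<in> B \<and> b \<in> C}"
proof -
  let ?T = "span {tensor_vec a b | a b. a \<in> B \<and> b \<in> C}"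
  have inner: "tensor_vec a y \<in> ?T" if "a \<in> B" "y \<in> span C" for a y
  proof (rule span_induct[OF that(2), where P="\<lambda>y. tensor_vec a y \<in> ?T"])
    show "subspace {y. tensor_vec a y \<in> ?T}"
      unfolding subspace_def by (auto simp: tv_zero2 tv_add2 tv_scale2 span_add span_scale span_zero)
  next
    fix y assume "y \<in> C" then show "tensor_vec a y \<in> ?T"
      using that(1) by (auto intro!: span_base)
  qed
  have "\<forall>y\<in>span C. tensor_vec x y \<in> ?T"
  proof (rule span_induct[OF assms(1), where P="\<lambda>x. \<forall>y\<in>span C. tensor_vec x y \<in> ?T"])
    show "subspace {x. \<forall>y\<in>span C. tensor_vec x y \<in> ?T}"
      unfolding subspace_def by (auto simp: tv_zero1 tv_add1 tv_scale1 span_add span_scale span_zero)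
  next
    fix x assume "x \<in> B" then show "\<forall>y\<in>span C. tensor_vec x y \<in> ?T"
      using inner by blast
  qed
  then show ?thesis using assms(2) by blast
qed

lemma onb_inner: "pairwise orthogonal B \<Longrightarrow> (\<forall>x\<in>B. norm x = 1) \<Longrightarrow> x \<in> B \<Longrightarrow> x' \<in> B \<Longrightarrow>
   x \<bullet> x' = (if x = x' then 1 else 0)"
  by (auto simp: pairwise_def orthogonal_def power2_norm_eq_inner[symmetric])

lemma tensor_onb:
  fixes B :: "(real^'a) set" and C :: "(real^'b) set"
  assumes "pairwise orthogonal B" "\<forall>x\<in>B. norm x = 1" "pairwise orthogonal C" "\<forall>y\<in>C. norm y = 1"
  shows "inj_on (\<lambda>(x,y). tensor_vec x y) (B \<times> C)"
    and "pairwise orthogonal {tensor_vec x y | x y. x \<in> B \<and> y \<in> C}"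
    and "\<forall>p\<in>{tensor_vec x y | x y. x \<in> B \<and> y \<in> C}. p \<bullet> p = 1"
proof -
  note oB = onb_inner[OF assms(1,2)] and oC = onb_inner[OF assms(3,4)]
  show "inj_on (\<lambda>(x,y). tensor_vec x y) (B \<times> C)"
  proof (rule inj_onI, clarsimp)
    fix x y x' y' assume h: "x \<in> B" "y \<in> C" "x' \<in> B" "y' \<in> C" "tensor_vec x y = tensor_vec x' y'"
    have "tensor_vec x y \<bullet> tensor_vec x' y' = tensor_vec x y \<bullet> tensor_vec x y" using h(5) by simp
    also have "\<dots> = 1" using h by (simp add: tv_inner oB oC)
    finally have "(x \<bullet> x') * (y \<bullet> y') = 1" by (simp add: tv_inner)
    then show "x = x' \<and> y = y'" using h oB oC by (auto split: if_splits)
  qed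
  show "pairwise orthogonal {tensor_vec x y | x y. x \<in> B \<and> y \<in> C}"
    unfolding pairwise_def orthogonal_def by (auto simp: tv_inner oB oC)
  show "\<forall>p\<in>{tensor_vec x y | x y. x \<in> B \<and> y \<in> C}. p \<bullet> p = 1"
    by (auto simp: tv_inner oB oC)
qed


lemma gen_zero:
  fixes Js8 :: "(real^'a^'a) list" and Jsr :: "(real^'b^'b) list"
    and L8 :: "(real^'a) set" and Lr :: "(real^'b) set"
  assumes "length Js8 = 8"
    and c8: "clifford_module Js8"
    and cr: "clifford_module Jsr"
    and l8: "L8 \<in> Lag Js8"
    and lr: "Lr \<in> Lag Jsr"
    and G: "G \<in> set (tensor_gens Js8 Jsr)"
    and s: "s \<in> {tensor_vec x y | x y. x \<in> L8 \<and> y \<in> Lr} \<union>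
              {tensor_vec x y | x y. x \<in> orthogonal_comp L8 \<and> y \<in> orthogonal_comp Lr}"
    and t: "t \<in> {tensor_vec x y | x y. x \<in> L8 \<and> y \<in> Lr} \<union>
              {tensor_vec x y | x y. x \<in> orthogonal_comp L8 \<and> y \<in> orthogonal_comp Lr}"
  shows "(G *v s) \<bullet> t = 0"
proof -
  have Kp: "(\<forall>u\<in>L8. Kprod Js8 *v u \<in> L8) \<and> (\<forall>u\<in>orthogonal_comp L8. Kprod Js8 *v u \<in> orthogonal_comp L8)"
    using K_pres[OF c8 l8, of Js8] assms(1) unfolding Kprod_def by simp
  have a1: "(A *v x) \<bullet> x' = 0" if "A \<in> set Js8" "x \<in> L8" "x' \<in> L8" for A x x'
    using Lag_br[OF l8 that] .
  have a2: "(A *v x) \<bullet> x' = 0" if "A \<in> set Js8" "x \<in> orthogonal_comp L8" "x' \<in> orthogonal_comp L8" for A x x'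
    using Lag_Jperp[OF c8 l8 that(1,2)] perp_inner[OF that(3)] by blast
  have b1: "(B *v y) \<bullet> y' = 0" if "B \<in> set Jsr" "y \<in> Lr" "y' \<in> Lr" for B y y'
    using Lag_br[OF lr that] .
  have b2: "(B *v y) \<bullet> y' = 0" if "B \<in> set Jsr" "y \<in> orthogonal_comp Lr" "y' \<in> orthogonal_comp Lr" for B y y'
    using Lag_Jperp[OF cr lr that(1,2)] perp_inner[OF that(3)] by blast
  have k1: "(Kprod Js8 *v x) \<bullet> x' = 0" if "x \<in> L8" "x' \<in> orthogonal_comp L8" for x x'
    using Kp perp_inner[OF that(2)] that(1) by blast
  have k2: "(Kprod Js8 *v x) \<bullet> x' = 0" if "x \<in> orthogonal_comp L8" "x' \<in> L8" for x x'
    using Kp perp_inner[OF _ that(2)] that(1) by blast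
  have r1: "y \<bullet> y' = 0" if "y \<in> Lr" "y' \<in> orthogonal_comp Lr" for y y'
    using perp_inner[OF that(2,1)] by simp
  have r2: "y \<bullet> y' = 0" if "y \<in> orthogonal_comp Lr" "y' \<in> Lr" for y y'
    using perp_inner[OF that] by simp
  obtain x y where sx: "s = tensor_vec x y"
     and sxy: "(x \<in> L8 \<and> y \<in> Lr) \<or> (x \<in> orthogonal_comp L8 \<and> y \<in> orthogonal_comp Lr)"
    using s by blast
  obtain x' y' where tx: "t = tensor_vec x' y'"
     and txy: "(x' \<in> L8 \<and> y' \<in> Lr) \<or> (x' \<in> orthogonal_comp L8 \<and> y' \<in> orthogonal_comp Lr)"
    using t by blast
  have form: "(tensor_mat P Q *v tensor_vec x y) \<bullet> tensor_vec x' y' = ((P *v x) \<bullet> x') * ((Q *v y) \<bullet> y')"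
    for P Q by (simp only: tm_mult tv_inner)
  from G consider (A) A where "A \<in> set Js8" "G = tensor_mat A (mat 1)"
    | (B) B where "B \<in> set Jsr" "G = tensor_mat (Kprod Js8) B"
    unfolding tensor_gens_def by auto
  then show ?thesis
  proof cases
    case A
    have "(A *v x) \<bullet> x' = 0 \<or> y \<bullet> y' = 0"
      using sxy txy a1[OF A(1), of x x'] a2[OF A(1), of x x'] r1[of y y'] r2[of y y'] by blast
    then show ?thesis unfolding sx tx A(2) form matrix_vector_mul_lid by auto
  next
    case B
    have "(Kprod Js8 *v x) \<bullet> x' = 0 \<or> (B *v y) \<bullet> y' = 0"
      using sxy txy b1[OF B(1), of y y'] b2[OF B(1), of y y'] k1[of x x'] k2[of x x'] by blast
    then show ?thesis unfolding sx tx B(2) form by auto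
  qed
qed

lemma bilinear_0: "bilinear (\<lambda>u v. (0::real))"
  unfolding bilinear_def by (simp add: linear_zero)

theorem theorem4p5:
  fixes Js8 :: "(real^'a^'a) list" and Jsr :: "(real^'b^'b) list"
    and L8 :: "(real^'a) set" and Lr :: "(real^'b) set"
  assumes "length Js8 = 8"
    and "clifford_module Js8"
    and "clifford_module Jsr"
    and "L8 \<in> Lag Js8"
    and "Lr \<in> Lag Jsr"
  shows "subspace_sum (tensor_space L8 Lr) (tensor_space (orthogonal_comp L8) (orthogonal_comp Lr))
           \<in> Lag (tensor_gens Js8 Jsr)"
proof -
  define S1 where "S1 = {tensor_vec x y | x y. x \<in> L8 \<and> y \<in> Lr}"
  define S2 where "S2 = {tensor_vec x y | x y. x \<in> orthogonal_comp L8 \<and> y \<in> orthogonal_comp Lr}"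
  have W: "subspace_sum (tensor_space L8 Lr) (tensor_space (orthogonal_comp L8) (orthogonal_comp Lr))
     = span (S1 \<union> S2)"
    unfolding subspace_sum_def tensor_space_def span_Un S1_def S2_def by simp
  have br: "(G *v u) \<bullet> v = 0" if "G \<in> set (tensor_gens Js8 Jsr)" "u \<in> span (S1 \<union> S2)" "v \<in> span (S1 \<union> S2)" for G u v
    using bilinear_eq[OF bilinear_br bilinear_0 order_refl order_refl that(2,3)]
      gen_zero[OF assms that(1)] unfolding S1_def S2_def by blast
  have sL8: "subspace L8" and sLr: "subspace Lr" using assms(4,5) Lag_sub by auto
  obtain B1 where B1: "B1 \<subseteq> L8" "pairwise orthogonal B1" "\<And>x. x \<in> B1 \<Longrightarrow> norm x = 1"
       "independent B1" "card B1 = dim L8" "span B1 = L8"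
    using orthonormal_basis_subspace[OF sL8] by blast
  obtain B2 where B2: "B2 \<subseteq> orthogonal_comp L8" "pairwise orthogonal B2" "\<And>x. x \<in> B2 \<Longrightarrow> norm x = 1"
       "independent B2" "card B2 = dim (orthogonal_comp L8)" "span B2 = orthogonal_comp L8"
    using orthonormal_basis_subspace[OF subspace_orthogonal_comp] by blast
  obtain C1 where C1: "C1 \<subseteq> Lr" "pairwise orthogonal C1" "\<And>x. x \<in> C1 \<Longrightarrow> norm x = 1"
       "independent C1" "card C1 = dim Lr" "span C1 = Lr"
    using orthonormal_basis_subspace[OF sLr] by blast
  obtain C2 where C2: "C2 \<subseteq> orthogonal_comp Lr" "pairwise orthogonal C2" "\<And>x. x \<in> C2 \<Longrightarrow> norm x = 1"
       "independent C2" "card C2 = dim (orthogonal_comp Lr)" "span C2 = orthogonal_comp Lr"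
    using orthonormal_basis_subspace[OF subspace_orthogonal_comp] by blast
  define T1 where "T1 = {tensor_vec x y | x y. x \<in> B1 \<and> y \<in> C1}"
  define T2 where "T2 = {tensor_vec x y | x y. x \<in> B2 \<and> y \<in> C2}"
  have T1im: "T1 = (\<lambda>(x,y). tensor_vec x y) ` (B1 \<times> C1)" unfolding T1_def by auto
  have T2im: "T2 = (\<lambda>(x,y). tensor_vec x y) ` (B2 \<times> C2)" unfolding T2_def by auto
  note on1 = tensor_onb[OF B1(2) _ C1(2), folded T1_def] and on2 = tensor_onb[OF B2(2) _ C2(2), folded T2_def]
  have fin: "finite B1" "finite B2" "finite C1" "finite C2"
    using B1(4) B2(4) C1(4) C2(4) independent_imp_finite by auto
  have cT1: "card T1 = dim L8 * dim Lr"
    unfolding T1im using card_image[OF on1(1)] B1(3,5) C1(3,5) by (simp add: card_cartesian_product)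
  have cT2: "card T2 = dim (orthogonal_comp L8) * dim (orthogonal_comp Lr)"
    unfolding T2im using card_image[OF on2(1)] B2(3,5) C2(3,5) by (simp add: card_cartesian_product)
  have cross: "p \<bullet> q = 0" if pq: "p \<in> T1" "q \<in> T2" for p q
  proof -
    obtain x y where "p = tensor_vec x y" "x \<in> B1" "y \<in> C1" using pq(1) unfolding T1_def by blast
    moreover obtain x' y' where "q = tensor_vec x' y'" "x' \<in> B2" "y' \<in> C2" using pq(2) unfolding T2_def by blast
    ultimately show ?thesis using perp_inner[of x' L8 x] B1(1) B2(1) by (auto simp: tv_inner)
  qed
  have self1: "\<forall>p\<in>T1. p \<bullet> p = 1" using on1(3) B1(3) C1(3) by blast
  have self2: "\<forall>p\<in>T2. p \<bullet> p = 1" using on2(3) B2(3) C2(3) by blast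
  have po1: "pairwise orthogonal T1" using on1(2) B1(3) C1(3) by blast
  have po2: "pairwise orthogonal T2" using on2(2) B2(3) C2(3) by blast
  have disj: "T1 \<inter> T2 = {}" using cross self1 by fastforce
  have po: "pairwise orthogonal (T1 \<union> T2)"
    unfolding pairwise_def
  proof (intro ballI impI)
    fix p q assume "p \<in> T1 \<union> T2" "q \<in> T1 \<union> T2" "p \<noteq> q"
    then consider "p \<in> T1" "q \<in> T1" | "p \<in> T2" "q \<in> T2" | "p \<in> T1" "q \<in> T2" | "p \<in> T2" "q \<in> T1"
      by blast
    then show "orthogonal p q"
    proof cases
      case 1 then show ?thesis using po1 \<open>p \<noteq> q\<close> unfolding pairwise_def by blast
    next
      case 2 then show ?thesis using po2 \<open>p \<noteq> q\<close> unfolding pairwise_def by blast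
    next
      case 3 then show ?thesis using cross unfolding orthogonal_def by blast
    next
      case 4 then show ?thesis using cross[of q p] unfolding orthogonal_def by (simp add: inner_commute)
    qed
  qed
  have n0: "0 \<notin> T1 \<union> T2" using self1 self2 by fastforce
  have ind: "independent (T1 \<union> T2)" by (rule pairwise_orthogonal_independent[OF po n0])
  have finT: "finite T1" "finite T2" unfolding T1im T2im using fin by auto
  have spT: "span (T1 \<union> T2) = span (S1 \<union> S2)"
  proof
    show "span (T1 \<union> T2) \<subseteq> span (S1 \<union> S2)"
    proof (rule span_mono)
      have "T1 \<subseteq> S1" unfolding T1_def S1_def using B1(1) C1(1) by blast
      moreover have "T2 \<subseteq> S2" unfolding T2_def S2_def using B2(1) C2(1) by blast
      ultimately show "T1 \<union> T2 \<subseteq> S1 \<union> S2" by blast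
    qed
    have "S1 \<union> S2 \<subseteq> span (T1 \<union> T2)"
    proof
      fix p assume "p \<in> S1 \<union> S2"
      then show "p \<in> span (T1 \<union> T2)"
      proof
        assume "p \<in> S1"
        then obtain x y where "p = tensor_vec x y" "x \<in> span B1" "y \<in> span C1"
          unfolding S1_def using B1(6) C1(6) by blast
        then have "p \<in> span T1" unfolding T1_def using tv_span by blast
        then show ?thesis by (meson span_mono Un_upper1 subsetD)
      next
        assume "p \<in> S2"
        then obtain x y where "p = tensor_vec x y" "x \<in> span B2" "y \<in> span C2"
          unfolding S2_def using B2(6) C2(6) by blast
        then have "p \<in> span T2" unfolding T2_def using tv_span by blast
        then show ?thesis by (meson span_mono Un_upper2 subsetD)
      qed
    qed
    then show "span (S1 \<union> S2) \<subseteq> span (T1 \<union> T2)" using span_minimal subspace_span by blast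
  qed
  have dimW: "dim (span (S1 \<union> S2)) = dim L8 * dim Lr + dim (orthogonal_comp L8) * dim (orthogonal_comp Lr)"
    unfolding spT[symmetric] dim_span_eq_card_independent[OF ind] card_Un_disjoint[OF finT disj] cT1 cT2 ..
  have d1: "dim (orthogonal_comp L8) = dim L8" using dim_perp[OF sL8] Lag_dim[OF assms(4)] by linarith
  have d2: "dim (orthogonal_comp Lr) = dim Lr" using dim_perp[OF sLr] Lag_dim[OF assms(5)] by linarith
  have "2 * dim (span (S1 \<union> S2)) = (2 * dim L8) * (2 * dim Lr)" unfolding dimW d1 d2 by simp
  also have "\<dots> = CARD('a \<times> 'b)" using Lag_dim[OF assms(4)] Lag_dim[OF assms(5)] by simp
  finally have dimOK: "2 * dim (span (S1 \<union> S2)) = CARD('a \<times> 'b)" .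
  show ?thesis
    unfolding W Lag_def heis_bracket_def map_repl
    using br dimOK by auto
qed

end
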